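(* Let $f(x):=x^n+a_1x^{n-1}+a_2x^{n-2}+\cdots+a_n$ be a real polynomial with roots $r,x_2,x_3,\ldots,x_n$, where $r$ is real and $\mathrm{Re}(x_j)\le 0$ for $j=2,3,\ldots,n$. Then: (i) Let $t$ be the largest integer such that $a_{2t}\ne0$. Then either $a_{2j}>0$ for all $j=1,2,\ldots,t$, or there exists $s\in\{1,2,\ldots,t\}$ such that $a_{2j}>0$ for $j=1,\ldots,s-1$, $a_{2s}\le 0$, and $a_{2j}<0$ for $j=s+1,\ldots,t$. (ii) Let $t'$ be the largest integer such that $a_{2t'-1}\ne0$. Then either $a_{2j-1}>0$ for all $j=1,2,\ldots,t'$, or there exists $s'\in\{1,2,\ldots,t'\}$ such that $a_{2j-1}>0$ for $j=1,\ldots,s'-1$, $a_{2s'-1}\le 0$, and $a_{2j-1}<0$ for $j=s'+1,\ldots,t'$. *)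

theory Defs
  imports Complex_Main "HOL-Computational_Algebra.Polynomial"
begin

text \<open>For a monic polynomial f(x) = x^n + a_1 x^(n-1) + ... + a_n, the coefficient a_k
  (with a_0 = 1); a_k is taken to be 0 for k > n.\<close>
definition acoef :: "real poly \<Rightarrow> nat \<Rightarrow> real" where
  "acoef f k = (if k \<le> degree f then coeff f (degree f - k) else 0)"

end

theory Submission imports Defs "HOL-Computational_Algebra.Fundamental_Theorem_Algebra" begin

definition C :: "real poly \<Rightarrow> int \<Rightarrow> real" where
  "C g i = (if i < 0 then 0 else coeff g (nat i))"

definition MM :: "real poly \<Rightarrow> int \<Rightarrow> int \<Rightarrow> int \<Rightarrow> real" where
  "MM g u v d = C g u * C g v - C g (u-d) * C g (v+d)"

definition inS :: "int \<Rightarrow> int \<Rightarrow> int \<Rightarrow> bool" where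
  "inS u v d \<longleftrightarrow> d \<ge> 1 \<and> even (v+d-u) \<and> v+d-u \<ge> 2"

definition SS :: "real poly \<Rightarrow> bool" where
  "SS g \<longleftrightarrow> (\<forall>i. 0 \<le> i \<and> i \<le> int (degree g) \<longrightarrow> C g i > 0) \<and>
     (\<forall>u v d. inS u v d \<and> 0 \<le> u \<and> u \<le> int (degree g) \<and> 0 \<le> v \<and> v \<le> int (degree g) \<longrightarrow> MM g u v d > 0)"

lemma C_out: "i > int (degree g) \<Longrightarrow> C g i = 0"
  by (auto simp: C_def coeff_eq_0)

lemma C_neg: "i < 0 \<Longrightarrow> C g i = 0"
  by (auto simp: C_def)

lemma C_add: "C (a + b) i = C a i + C b i"
  by (simp add: C_def)

lemma C_smult: "C (smult c a) i = c * C a i"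
  by (simp add: C_def)

lemma C_pCons0: "C (pCons 0 a) i = C a (i - 1)"
proof (cases "i \<le> 0")
  case True then show ?thesis
    by (cases "i = 0") (auto simp: C_def)
next
  case False
  then have "nat i = Suc (nat (i - 1))" by simp
  with False show ?thesis by (simp add: C_def)
qed

lemma C_lin: "C ([:c,1:] * g) i = c * C g i + C g (i-1)"
  by (simp add: C_add C_smult C_pCons0)

lemma C_quad: "C ([:q,p,1:] * g) i = q * C g i + p * C g (i-1) + C g (i-2)"
  by (simp add: C_add C_smult C_pCons0 algebra_simps)

declare mult_pCons_left[simp del]

lemma SS_C_nonneg: "SS g \<Longrightarrow> C g i \<ge> 0"
  unfolding SS_def
  by (cases "i < 0"; cases "i > int (degree g)") (auto simp: C_neg C_out intro: less_imp_le)

lemma SS_MM_nonneg: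
  assumes "SS g" "inS u v d"
  shows "MM g u v d \<ge> 0"
proof (cases "0 \<le> u \<and> u \<le> int (degree g) \<and> 0 \<le> v \<and> v \<le> int (degree g)")
  case True then show ?thesis using assms unfolding SS_def by (auto intro: less_imp_le)
next
  case False
  have z: "C g (u-d) * C g (v+d) = 0"
  proof -
    from False consider "u < 0" | "u > int (degree g)" | "v < 0" | "v > int (degree g)" by linarith
    then show ?thesis
    proof cases
      case 1 then show ?thesis using assms(2) by (simp add: C_neg inS_def)
    next
      case 2 then show ?thesis using assms(2) by (simp add: C_out inS_def)
    next
      case 3 then show ?thesis using assms(2) by (simp add: C_neg inS_def)
    next
      case 4 then show ?thesis using assms(2) by (simp add: C_out inS_def)
    qed
  qed
  have "C g u * C g v \<ge> 0" using SS_C_nonneg[OF assms(1)] by simp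
  then show ?thesis unfolding MM_def using z by linarith
qed

lemma MM_lin_id:
  "MM ([:c,1:] * g) u v d = c\<^sup>2 * MM g u v d + c * MM g u (v-1) (d+1) + c * MM g (u-1) v (d-1)
     + MM g (u-1) (v-1) d"
  unfolding MM_def C_lin by (simp add: algebra_simps power2_eq_square)

lemma MM_quad_id:
  "MM ([:q,p,1:] * g) u v d = q\<^sup>2 * MM g u v d + q*p * MM g u (v-1) (d+1) + q * MM g u (v-2) (d+2)
     + p*q * MM g (u-1) v (d-1) + p\<^sup>2 * MM g (u-1) (v-1) d + p * MM g (u-1) (v-2) (d+1)
     + q * MM g (u-2) v (d-2) + p * MM g (u-2) (v-1) (d-1) + MM g (u-2) (v-2) d"
  unfolding MM_def C_quad by (simp add: algebra_simps power2_eq_square)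

lemma inS_eq: "inS u v d \<Longrightarrow> v' + d' - u' = v + d - u \<Longrightarrow> d' \<ge> 1 \<Longrightarrow> inS u' v' d'"
  unfolding inS_def by metis

lemma inS_d1: "inS u v d \<Longrightarrow> d \<ge> 1"
  unfolding inS_def by simp

lemma SS_nz: "SS g \<Longrightarrow> g \<noteq> 0"
  unfolding SS_def by (auto simp: C_def)

lemma MM_d0: "MM g u v 0 = 0"
  by (simp add: MM_def)

lemma MM_trivial:
  assumes "u - d < 0" shows "MM g u v d = C g u * C g v"
  using assms by (simp add: MM_def C_neg)

lemma deg_lin: "(g::real poly) \<noteq> 0 \<Longrightarrow> degree ([:c,1:] * g) = degree g + 1"
  using degree_mult_eq[of "[:c,1:]" g] by (simp del: mult_pCons_left)

lemma deg_quad: "(g::real poly) \<noteq> 0 \<Longrightarrow> degree ([:q,p,1:] * g) = degree g + 2"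
  using degree_mult_eq[of "[:q,p,1:]" g] by (simp del: mult_pCons_left)

lemma SS_lin:
  assumes S: "SS g" and c: "c > 0"
  shows "SS ([:c,1:] * g)"
proof -
  let ?g = "[:c,1:] * g"
  define m where "m = int (degree g)"
  have dg: "int (degree ?g) = m + 1" using deg_lin[OF SS_nz[OF S]] m_def by simp
  have pos: "\<And>i. 0 \<le> i \<Longrightarrow> i \<le> m \<Longrightarrow> C g i > 0" using S m_def unfolding SS_def by auto
  have nn: "\<And>i. C g i \<ge> 0" using SS_C_nonneg[OF S] .
  have Mp: "\<And>u v d. inS u v d \<Longrightarrow> 0 \<le> u \<Longrightarrow> u \<le> m \<Longrightarrow> 0 \<le> v \<Longrightarrow> v \<le> m \<Longrightarrow> MM g u v d > 0"
    using S m_def unfolding SS_def by auto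
  have Mn: "\<And>u v d. inS u v d \<Longrightarrow> MM g u v d \<ge> 0" using SS_MM_nonneg[OF S] .
  have Cpos: "C ?g i > 0" if "0 \<le> i" "i \<le> m + 1" for i
  proof (cases "i \<le> m")
    case True
    then have "c * C g i > 0" using pos that c by simp
    then show ?thesis using nn[of "i-1"] unfolding C_lin by simp
  next
    case False
    then have "C g (i-1) > 0" using that m_def by (intro pos) auto
    then show ?thesis using nn[of i] c unfolding C_lin by (simp add: add_nonneg_pos)
  qed
  have Mpos: "MM ?g u v d > 0" if iS: "inS u v d" and r: "0 \<le> u" "u \<le> m+1" "0 \<le> v" "v \<le> m+1" for u v d
  proof (cases "u - d < 0")
    case True
    then show ?thesis using MM_trivial Cpos r by simp
  next
    case False
    have d1: "d \<ge> 1" using iS by (simp add: inS_def)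
    have t1: "MM g u (v-1) (d+1) \<ge> 0" using iS d1 by (intro Mn inS_eq[OF iS]) auto
    have t2: "MM g (u-1) v (d-1) \<ge> 0"
    proof (cases "d = 1")
      case True then show ?thesis by (simp add: MM_d0)
    next
      case False then show ?thesis using iS d1 by (intro Mn inS_eq[OF iS]) auto
    qed
    have t0: "MM g u v d \<ge> 0" using Mn iS by simp
    have t3: "MM g (u-1) (v-1) d \<ge> 0" using iS d1 by (intro Mn inS_eq[OF iS]) auto
    have "c\<^sup>2 * MM g u v d > 0 \<or> MM g (u-1) (v-1) d > 0"
    proof (cases "u \<le> m \<and> v \<le> m")
      case True then show ?thesis using Mp[OF iS] r c by simp
    next
      case False
      have "u \<ge> 1" using \<open>\<not> u - d < 0\<close> d1 by linarith
      moreover have "v \<ge> 1"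
      proof (rule ccontr)
        assume "\<not> v \<ge> 1"
        then have "v = 0" using r by simp
        then have "u = m + 1" using False r by simp
        then show False using iS \<open>v = 0\<close> \<open>\<not> u - d < 0\<close> by (simp add: inS_def)
      qed
      moreover have "inS (u-1) (v-1) d" using iS d1 by (intro inS_eq[OF iS]) auto
      ultimately show ?thesis using Mp[of "u-1" "v-1" d] r by simp
    qed
    moreover have "c * MM g u (v-1) (d+1) \<ge> 0" "c * MM g (u-1) v (d-1) \<ge> 0" "c\<^sup>2 * MM g u v d \<ge> 0"
      using t1 t2 t0 c by simp_all
    ultimately show ?thesis unfolding MM_lin_id using t3 by linarith
  qed
  show ?thesis unfolding SS_def dg using Cpos Mpos by blast
qed

lemma inS_I: "inS u v d \<Longrightarrow> d' \<ge> 1 \<Longrightarrow> v'+d'-u' \<ge> 2 \<Longrightarrow> even (v'+d'-u' - (v+d-u)) \<Longrightarrow> inS u' v' d'"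
  unfolding inS_def by (metis dvd_add_right_iff diff_add_cancel)

lemma MM_d1_id: "MM g u (v-2) 3 + MM g (u-2) v (-1) = MM g (u-2) v 1 + MM g u (v-2) 1"
  unfolding MM_def by (simp add: algebra_simps)

lemma SS_quad:
  assumes S: "SS g" and p: "p \<ge> 0" and q: "q > 0" and pm: "p > 0 \<or> degree g \<ge> 2"
  shows "SS ([:q,p,1:] * g)"
proof -
  let ?g = "[:q,p,1:] * g"
  define m where "m = int (degree g)"
  have m0: "m \<ge> 0" using m_def by simp
  have pm': "p > 0 \<or> m \<ge> 2" using pm m_def by auto
  have dg: "int (degree ?g) = m + 2" using deg_quad[OF SS_nz[OF S]] m_def by simp
  have pos: "\<And>i. 0 \<le> i \<Longrightarrow> i \<le> m \<Longrightarrow> C g i > 0" using S m_def unfolding SS_def by auto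
  have nn: "\<And>i. C g i \<ge> 0" using SS_C_nonneg[OF S] .
  have Mp: "\<And>u v d. inS u v d \<Longrightarrow> 0 \<le> u \<Longrightarrow> u \<le> m \<Longrightarrow> 0 \<le> v \<Longrightarrow> v \<le> m \<Longrightarrow> MM g u v d > 0"
    using S m_def unfolding SS_def by auto
  have Mn: "\<And>u v d. inS u v d \<Longrightarrow> MM g u v d \<ge> 0" using SS_MM_nonneg[OF S] .
  have Cpos: "C ?g i > 0" if "0 \<le> i" "i \<le> m + 2" for i
  proof -
    have a: "q * C g i \<ge> 0" "p * C g (i-1) \<ge> 0" "C g (i-2) \<ge> 0" using nn q p by simp_all
    have "q * C g i > 0 \<or> p * C g (i-1) > 0 \<or> C g (i-2) > 0"
    proof (cases "i \<le> m")
      case True then show ?thesis using pos that q by simp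
    next
      case False
      show ?thesis
      proof (cases "i \<ge> 2")
        case True then show ?thesis using pos that False by simp
      next
        case False2: False
        then have "i = 1" "m = 0" using False that m0 by auto
        then have "p > 0" using pm' by simp
        then show ?thesis using pos[of 0] \<open>i = 1\<close> \<open>m = 0\<close> by simp
      qed
    qed
    then show ?thesis using a unfolding C_quad by linarith
  qed
  have Mpos: "MM ?g u v d > 0" if iS: "inS u v d" and r: "0 \<le> u" "u \<le> m+2" "0 \<le> v" "v \<le> m+2" for u v d
  proof (cases "u - d < 0")
    case True
    then show ?thesis using MM_trivial Cpos r by simp
  next
    case False
    have d1: "d \<ge> 1" using iS by (simp add: inS_def)
    have iS2: "v + d - u \<ge> 2" using iS by (simp add: inS_def)
    have T0: "MM g u v d \<ge> 0" using Mn iS by simp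
    have T1: "MM g u (v-1) (d+1) \<ge> 0" using d1 by (intro Mn inS_eq[OF iS]) auto
    have T3: "MM g (u-1) v (d-1) \<ge> 0"
    proof (cases "d = 1")
      case True then show ?thesis by (simp add: MM_d0)
    next
      case False then show ?thesis using d1 by (intro Mn inS_eq[OF iS]) auto
    qed
    have T4: "MM g (u-1) (v-1) d \<ge> 0" using d1 by (intro Mn inS_eq[OF iS]) auto
    have T5: "MM g (u-1) (v-2) (d+1) \<ge> 0" using d1 by (intro Mn inS_eq[OF iS]) auto
    have T7: "MM g (u-2) (v-1) (d-1) \<ge> 0"
    proof (cases "d = 1")
      case True then show ?thesis by (simp add: MM_d0)
    next
      case False then show ?thesis using d1 by (intro Mn inS_eq[OF iS]) auto
    qed
    have T8: "MM g (u-2) (v-2) d \<ge> 0" using d1 by (intro Mn inS_eq[OF iS]) auto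
    have R1: "MM g (u-2) v 1 \<ge> 0" if "d = 1"
      using that iS2 by (intro Mn inS_I[OF iS]) auto
    have R2: "MM g u (v-2) 1 \<ge> 0" if "d = 1"
    proof (cases "v = u + 1")
      case True then show ?thesis by (simp add: MM_def)
    next
      case False
      have "even (v + d - u)" using iS by (simp add: inS_def)
      then have "even (v + 1 - u)" using that by simp
      then have "v + 1 - u \<noteq> 3" by presburger
      then have "v + 1 - u \<ge> 4" using False that iS2 by auto
      then show ?thesis using that by (intro Mn inS_I[OF iS]) auto
    qed
    have R: "MM g u (v-2) (d+2) + MM g (u-2) v (d-2) \<ge> 0"
    proof (cases "d = 1")
      case True
      then show ?thesis using MM_d1_id[of g u v] R1 R2 by simp
    next
      case False
      have "MM g u (v-2) (d+2) \<ge> 0" using d1 by (intro Mn inS_eq[OF iS]) auto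
      moreover have "MM g (u-2) v (d-2) \<ge> 0"
      proof (cases "d = 2")
        case True then show ?thesis by (simp add: MM_d0)
      next
        case False then show ?thesis using d1 \<open>d \<noteq> 1\<close> by (intro Mn inS_eq[OF iS]) auto
      qed
      ultimately show ?thesis by simp
    qed
    have key: "q\<^sup>2 * MM g u v d > 0 \<or> MM g (u-2) (v-2) d > 0 \<or>
               q * (MM g u (v-2) (d+2) + MM g (u-2) v (d-2)) > 0 \<or> p * MM g (u-1) (v-2) (d+1) > 0"
    proof (cases "u \<le> m \<and> v \<le> m")
      case True then show ?thesis using Mp[OF iS] r q by simp
    next
      case nb: False
      show ?thesis
      proof (cases "u \<ge> 2 \<and> v \<ge> 2")
        case True
        moreover have "inS (u-2) (v-2) d" using d1 by (intro inS_eq[OF iS]) auto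
        ultimately show ?thesis using Mp[of "u-2" "v-2" d] r by simp
      next
        case nc: False
        have v2: "v \<ge> 2" using False iS2 nc by linarith
        then have u1: "u = 1" "d = 1" using nc False d1 by auto
        then have vm: "v > m" using nb m0 v2 by auto
        have ev: "even v" using iS u1 by (simp add: inS_def)
        show ?thesis
        proof (cases "v = 2")
          case True
          then have "p > 0" using pm' vm by auto
          moreover have "MM g 0 0 2 > 0" using m0 by (intro Mp) (auto simp: inS_def)
          ultimately show ?thesis using u1 True by simp
        next
          case False
          then have v4: "v \<ge> 4" using v2 ev by presburger
          then have "m \<ge> 1" using r by simp
          have "MM g 1 (v-2) 1 > 0" using v4 ev r \<open>m \<ge> 1\<close> by (intro Mp) (auto simp: inS_def)
          moreover have "MM g (1-2) v 1 \<ge> 0" using R1 u1 by simp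
          ultimately have "MM g u (v-2) 1 + MM g (u-2) v 1 > 0" using u1 by simp
          then have "q * (MM g u (v-2) 1 + MM g (u-2) v 1) > 0" using q by simp
          moreover have "MM g u (v-2) (d+2) + MM g (u-2) v (d-2) = MM g u (v-2) 1 + MM g (u-2) v 1"
            using MM_d1_id[of g u v] u1 by (simp add: add.commute)
          ultimately have "q * (MM g u (v-2) (d+2) + MM g (u-2) v (d-2)) > 0" by simp
          then show ?thesis by blast
        qed
      qed
    qed
    have "q * (MM g u (v-2) (d+2) + MM g (u-2) v (d-2)) \<ge> 0" using R q by simp
    moreover have "q\<^sup>2 * MM g u v d \<ge> 0" "q*p * MM g u (v-1) (d+1) \<ge> 0" "p*q * MM g (u-1) v (d-1) \<ge> 0"
      "p\<^sup>2 * MM g (u-1) (v-1) d \<ge> 0" "p * MM g (u-1) (v-2) (d+1) \<ge> 0" "p * MM g (u-2) (v-1) (d-1) \<ge> 0"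
      using T0 T1 T3 T4 T5 T7 p q by simp_all
    ultimately show ?thesis unfolding MM_quad_id using key T8 by (simp add: algebra_simps; linarith)
  qed
  show ?thesis unfolding SS_def dg using Cpos Mpos by blast
qed

lemma SS_one: "SS 1"
  unfolding SS_def
proof (intro conjI allI impI)
  fix i :: int assume "0 \<le> i \<and> i \<le> int (degree (1::real poly))"
  then have "i = 0" by simp
  then show "C 1 i > 0" by (simp add: C_def)
next
  fix u v d :: int assume a: "inS u v d \<and> 0 \<le> u \<and> u \<le> int (degree (1::real poly)) \<and> 0 \<le> v \<and> v \<le> int (degree (1::real poly))"
  then have "u = 0" "v = 0" "d \<ge> 1" by (auto simp: inS_def)
  then show "MM 1 u v d > 0" by (simp add: MM_def C_def)
qed

inductive SP :: "real poly \<Rightarrow> bool" where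
  SP1: "SP 1"
| SPl: "SP h \<Longrightarrow> c > 0 \<Longrightarrow> SP ([:c,1:] * h)"
| SPq: "SP h \<Longrightarrow> p > 0 \<Longrightarrow> q > 0 \<Longrightarrow> SP ([:q,p,1:] * h)"

inductive EV :: "real poly \<Rightarrow> bool" where
  EV1: "EV 1"
| EVq: "EV e \<Longrightarrow> q > 0 \<Longrightarrow> EV ([:q,0,1:] * e)"

lemma SP_SS: "SP h \<Longrightarrow> SS h"
  by (induction rule: SP.induct) (auto intro: SS_one SS_lin SS_quad)

lemma EV_nz: "EV e \<Longrightarrow> e \<noteq> 0"
  by (induction rule: EV.induct) (auto simp del: mult_pCons_left)

lemma SP_nz: "SP e \<Longrightarrow> e \<noteq> 0"
  by (induction rule: SP.induct) (auto simp del: mult_pCons_left)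

lemma EV_SS: "EV e \<Longrightarrow> SS h \<Longrightarrow> degree h \<ge> 2 \<Longrightarrow> SS (e * h)"
proof (induction rule: EV.induct)
  case EV1 then show ?case by simp
next
  case (EVq e q)
  have "SS (e * h)" using EVq by simp
  moreover have "degree (e * h) \<ge> 2"
    using EVq degree_mult_eq[of e h] EV_nz[OF EVq(1)] SS_nz[OF EVq(4)] by simp
  ultimately have "SS ([:q,0,1:] * (e * h))" using EVq(2) by (intro SS_quad) auto
  then show ?case by (simp only: mult.assoc)
qed

lemma SP_deg0: "SP h \<Longrightarrow> degree h = 0 \<Longrightarrow> h = 1"
proof (induction rule: SP.induct)
  case SP1 then show ?case by simp
next
  case (SPl h c) then show ?case using deg_lin[OF SP_nz[OF SPl(1)], of c] by simp
next
  case (SPq h p q) then show ?case using deg_quad[OF SP_nz[OF SPq(1)], of q p] by simp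
qed

lemma SP_deg1: "SP h \<Longrightarrow> degree h = 1 \<Longrightarrow> \<exists>a>0. h = [:a,1:]"
proof (induction rule: SP.induct)
  case SP1 then show ?case by simp
next
  case (SPl h c)
  then have "degree h = 0" using deg_lin[OF SP_nz[OF SPl(1)], of c] by simp
  then have "h = 1" using SP_deg0 SPl by simp
  then show ?case using SPl by auto
next
  case (SPq h p q) then show ?case using deg_quad[OF SP_nz[OF SPq(1)], of q p] by simp
qed

definition EVP :: "real poly \<Rightarrow> bool" where
  "EVP e \<longleftrightarrow> even (degree e) \<and> (\<forall>i. odd i \<longrightarrow> C e i = 0) \<and>
     (\<forall>i. even i \<and> 0 \<le> i \<and> i \<le> int (degree e) \<longrightarrow> C e i > 0) \<and>
     (\<forall>i. even i \<and> 0 \<le> i \<and> i \<le> int (degree e) \<longrightarrow> (C e i)\<^sup>2 > C e (i-2) * C e (i+2))"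

lemma EVP_nonneg: "EVP e \<Longrightarrow> C e i \<ge> 0"
  unfolding EVP_def
  by (cases "i < 0"; cases "i > int (degree e)"; cases "even i") (auto simp: C_neg C_out intro: less_imp_le)

lemma EVP_L_nonneg:
  assumes E: "EVP e" shows "(C e i)\<^sup>2 \<ge> C e (i-2) * C e (i+2)"
proof (cases "even i \<and> 0 \<le> i \<and> i \<le> int (degree e)")
  case True then show ?thesis using E unfolding EVP_def by (auto intro: less_imp_le)
next
  case False
  have "C e (i-2) * C e (i+2) = 0"
  proof -
    from False consider "odd i" | "i < 0" | "i > int (degree e)" by linarith
    then show ?thesis
    proof cases
      case 1 then have "odd (i-2)" by simp
      then show ?thesis using E unfolding EVP_def by simp
    qed (simp_all add: C_neg C_out)
  qed
  then show ?thesis unfolding \<open>C e (i-2) * C e (i+2) = 0\<close> by simp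
qed

lemma EVP_N_nonneg:
  assumes E: "EVP e" and ev: "even i"
  shows "C e i * C e (i-2) \<ge> C e (i-4) * C e (i+2)"
proof (cases "0 \<le> i - 2 \<and> i \<le> int (degree e)")
  case True
  have p1: "C e i > 0" "C e (i-2) > 0" using E True ev unfolding EVP_def by auto
  have L1: "(C e i)\<^sup>2 \<ge> C e (i-2) * C e (i+2)" using EVP_L_nonneg[OF E] .
  have L2: "(C e (i-2))\<^sup>2 \<ge> C e (i-4) * C e i" using EVP_L_nonneg[OF E, of "i-2"] by simp
  have n: "C e (i-4) \<ge> 0" "C e (i+2) \<ge> 0" using EVP_nonneg[OF E] by auto
  have "(C e i * C e (i-2)) * (C e i * C e (i-2)) \<ge> (C e (i-2) * C e (i+2)) * (C e (i-4) * C e i)"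
    using mult_mono[OF L1 L2] n p1 unfolding power2_eq_square by (simp add: mult_nonneg_nonneg)
  then have "(C e i * C e (i-2)) * (C e i * C e (i-2)) \<ge> (C e i * C e (i-2)) * (C e (i-4) * C e (i+2))"
    by (simp add: algebra_simps)
  then show ?thesis using p1 by (simp add: mult_le_cancel_left_pos)
next
  case False
  then have z: "C e (i-4) * C e (i+2) = 0" by (auto simp: C_neg C_out)
  show ?thesis unfolding z using EVP_nonneg[OF E, of i] EVP_nonneg[OF E, of "i-2"] by simp
qed

lemma EVP_one: "EVP 1"
  unfolding EVP_def by (auto simp: C_def)

lemma EVP_quad:
  assumes E: "EVP e" and q: "q > 0"
  shows "EVP ([:q,0,1:] * e)"
proof -
  let ?e = "[:q,0,1:] * e"
  have nz: "e \<noteq> 0" using E unfolding EVP_def by (auto simp: C_def)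
  define m where "m = int (degree e)"
  have m0: "m \<ge> 0" using m_def by simp
  have dg: "int (degree ?e) = m + 2" using deg_quad[OF nz] m_def by simp
  have Cq: "\<And>i. C ?e i = q * C e i + C e (i-2)" by (simp only: C_quad)
  have odd0: "\<And>i. odd i \<Longrightarrow> C e i = 0" using E unfolding EVP_def by simp
  have pos: "\<And>i. even i \<Longrightarrow> 0 \<le> i \<Longrightarrow> i \<le> m \<Longrightarrow> C e i > 0" using E m_def unfolding EVP_def by simp
  have Lp: "\<And>i. even i \<Longrightarrow> 0 \<le> i \<Longrightarrow> i \<le> m \<Longrightarrow> (C e i)\<^sup>2 > C e (i-2) * C e (i+2)"
    using E m_def unfolding EVP_def by simp
  have nn: "\<And>i. C e i \<ge> 0" using EVP_nonneg[OF E] .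
  have "even (degree ?e)" using E deg_quad[OF nz, of q 0] unfolding EVP_def by simp
  moreover have "\<forall>i. odd i \<longrightarrow> C ?e i = 0" using odd0 by (simp add: Cq)
  moreover have "\<forall>i. even i \<and> 0 \<le> i \<and> i \<le> int (degree ?e) \<longrightarrow> C ?e i > 0"
  proof (intro allI impI)
    fix i assume a: "even i \<and> 0 \<le> i \<and> i \<le> int (degree ?e)"
    show "C ?e i > 0"
    proof (cases "i \<le> m")
      case True then show ?thesis using pos[of i] a q nn[of "i-2"] by (simp add: Cq add_pos_nonneg)
    next
      case False
      then have "i - 2 \<ge> 0" using a m0 by presburger
      then show ?thesis using pos[of "i-2"] a dg q nn[of i] by (simp add: Cq add_nonneg_pos)
    qed
  qed
  moreover have "\<forall>i. even i \<and> 0 \<le> i \<and> i \<le> int (degree ?e) \<longrightarrow> (C ?e i)\<^sup>2 > C ?e (i-2) * C ?e (i+2)"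
  proof (intro allI impI)
    fix i assume a: "even i \<and> 0 \<le> i \<and> i \<le> int (degree ?e)"
    have id: "(C ?e i)\<^sup>2 - C ?e (i-2) * C ?e (i+2) =
      q\<^sup>2 * ((C e i)\<^sup>2 - C e (i-2) * C e (i+2)) + q * (C e i * C e (i-2) - C e (i-4) * C e (i+2))
      + ((C e (i-2))\<^sup>2 - C e (i-4) * C e i)"
      unfolding Cq by (simp add: algebra_simps power2_eq_square)
    have A: "(C e i)\<^sup>2 - C e (i-2) * C e (i+2) \<ge> 0" using EVP_L_nonneg[OF E, of i] by simp
    have B: "(C e (i-2))\<^sup>2 - C e (i-4) * C e i \<ge> 0" using EVP_L_nonneg[OF E, of "i-2"] by simp
    have N: "C e i * C e (i-2) - C e (i-4) * C e (i+2) \<ge> 0" using EVP_N_nonneg[OF E, of i] a by simp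
    have "q\<^sup>2 * ((C e i)\<^sup>2 - C e (i-2) * C e (i+2)) > 0 \<or> (C e (i-2))\<^sup>2 - C e (i-4) * C e i > 0"
    proof (cases "i \<le> m")
      case True then show ?thesis using Lp[of i] a q by simp
    next
      case False
      then have "i - 2 \<ge> 0" using a m0 by presburger
      then show ?thesis using Lp[of "i-2"] a dg by simp
    qed
    moreover have "q\<^sup>2 * ((C e i)\<^sup>2 - C e (i-2) * C e (i+2)) \<ge> 0" "q * (C e i * C e (i-2) - C e (i-4) * C e (i+2)) \<ge> 0"
      using A N q by simp_all
    ultimately have "(C ?e i)\<^sup>2 - C ?e (i-2) * C ?e (i+2) > 0" unfolding id using B by linarith
    then show "(C ?e i)\<^sup>2 > C ?e (i-2) * C ?e (i+2)" by simp
  qed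
  ultimately show ?thesis unfolding EVP_def by blast
qed

lemma EV_EVP: "EV e \<Longrightarrow> EVP e"
  by (induction rule: EV.induct) (auto intro: EVP_one EVP_quad)

definition tb :: "real poly \<Rightarrow> int \<Rightarrow> real" where
  "tb G k = C G (int (degree G) - k)"

lemma ratio_step:
  fixes bx bx1 yb yb1 r :: real
  assumes "bx > 0" "yb > 0" "yb * bx1 - yb1 * bx > 0" "bx1 - r * bx \<le> 0"
  shows "yb1 - r * yb < 0"
proof -
  have "yb1 * bx < yb * bx1" using assms(3) by simp
  also have "\<dots> \<le> yb * (r * bx)" using assms(2,4) by (intro mult_left_mono) auto
  finally have "yb1 * bx < (r * yb) * bx" by (simp add: algebra_simps)
  then show ?thesis using assms(1) by (simp add: mult_less_cancel_right)
qed

lemma SS_case: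
  fixes s j t ofs :: int
  assumes S: "SS G" and sj: "1 \<le> s" "s < j" "j \<le> t" and ofs: "ofs = 0 \<or> ofs = 1"
    and As: "tb G (2*s-ofs) - r * tb G (2*s-ofs-1) \<le> 0"
    and At: "tb G (2*t-ofs) - r * tb G (2*t-ofs-1) \<noteq> 0"
  shows "tb G (2*j-ofs) - r * tb G (2*j-ofs-1) < 0"
proof -
  define m where "m = int (degree G)"
  have pos: "\<And>k. 0 \<le> k \<Longrightarrow> k \<le> m \<Longrightarrow> tb G k > 0" using S unfolding SS_def tb_def m_def by auto
  have zero: "\<And>k. k < 0 \<or> k > m \<Longrightarrow> tb G k = 0" unfolding tb_def m_def by (auto simp: C_neg C_out)
  have tm: "2*t-ofs-1 \<le> m"
  proof (rule ccontr)
    assume "\<not> ?thesis"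
    then have "tb G (2*t-ofs) = 0" "tb G (2*t-ofs-1) = 0" using zero by auto
    then show False using At by simp
  qed
  define x where "x = 2*s-ofs-1"
  define y where "y = 2*j-ofs-1"
  have xy: "0 \<le> x" "x < y" "y \<le> m" "even (y - x)" using sj ofs tm unfolding x_def y_def by auto
  have "y - x \<ge> 2" using xy by presburger
  then have iS: "inS (m-y) (m-x-1) 1" unfolding inS_def using xy by simp
  have "MM G (m-y) (m-x-1) 1 > 0"
    using S iS xy unfolding SS_def m_def[symmetric] by auto
  then have cr: "tb G y * tb G (x+1) - tb G (y+1) * tb G x > 0"
    unfolding MM_def tb_def m_def[symmetric] by (simp add: algebra_simps)
  have "tb G (y+1) - r * tb G y < 0"
    by (rule ratio_step[OF _ _ cr]) (use pos xy As in \<open>auto simp: x_def\<close>)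
  then show ?thesis unfolding y_def by simp
qed

lemma EVP_tb:
  assumes E: "EVP e"
  shows "\<And>k. odd k \<Longrightarrow> tb e k = 0"
    and "\<And>k. even k \<Longrightarrow> 0 \<le> k \<Longrightarrow> k \<le> int (degree e) \<Longrightarrow> tb e k > 0"
    and "\<And>k. k < 0 \<or> k > int (degree e) \<Longrightarrow> tb e k = 0"
    and "\<And>k. even k \<Longrightarrow> 0 \<le> k \<Longrightarrow> k \<le> int (degree e) \<Longrightarrow> (tb e k)\<^sup>2 > tb e (k-2) * tb e (k+2)"
proof -
  have ev: "even (int (degree e))" using E unfolding EVP_def by simp
  show "\<And>k. odd k \<Longrightarrow> tb e k = 0" using E ev unfolding EVP_def tb_def by simp
  show "\<And>k. even k \<Longrightarrow> 0 \<le> k \<Longrightarrow> k \<le> int (degree e) \<Longrightarrow> tb e k > 0" using E ev unfolding EVP_def tb_def by simp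
  show "\<And>k. k < 0 \<or> k > int (degree e) \<Longrightarrow> tb e k = 0" unfolding tb_def by (auto simp: C_neg C_out)
  fix k :: int assume a: "even k" "0 \<le> k" "k \<le> int (degree e)"
  have "(C e (int (degree e) - k))\<^sup>2 > C e (int (degree e) - k - 2) * C e (int (degree e) - k + 2)"
    using E ev a unfolding EVP_def by simp
  then show "(tb e k)\<^sup>2 > tb e (k-2) * tb e (k+2)" unfolding tb_def by (simp add: algebra_simps)
qed

lemma EV_case:
  fixes s j t ofs :: int
  assumes E: "EVP G" and sj: "1 \<le> s" "s < j" "j \<le> t" and ofs: "ofs = 0 \<or> ofs = 1"
    and As: "tb G (2*s-ofs) - r * tb G (2*s-ofs-1) \<le> 0"
    and At: "tb G (2*t-ofs) - r * tb G (2*t-ofs-1) \<noteq> 0"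
  shows "tb G (2*j-ofs) - r * tb G (2*j-ofs-1) < 0"
proof -
  define m where "m = int (degree G)"
  note T = EVP_tb[OF E, folded m_def]
  from ofs show ?thesis
  proof
    assume o0: "ofs = 0"
    have od: "\<And>k. tb G (2*k-1) = 0" using T(1) by simp
    have "tb G (2*t) \<noteq> 0" using At o0 od by simp
    then have "2*t \<le> m" using T(3) by force
    then have "tb G (2*s) > 0" using T(2) sj by simp
    then show ?thesis using As o0 od by simp
  next
    assume o1: "ofs = 1"
    have od: "\<And>k. tb G (2*k-1) = 0" using T(1) by simp
    have "tb G (2*t-2) \<noteq> 0" "r \<noteq> 0" using At o1 od by (simp_all add: algebra_simps)
    then have "2*t-2 \<le> m" using T(3) by force
    then have p: "tb G (2*s-2) > 0" "tb G (2*j-2) > 0" using T(2) sj by simp_all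
    then have "r > 0" using As o1 od \<open>r \<noteq> 0\<close> by (simp add: algebra_simps)
      (metis mult_pos_pos linorder_neqE_linordered_idom mult_neg_pos not_less)
    then show ?thesis using p o1 od by (simp add: algebra_simps)
  qed
qed

lemma tb_lin: assumes "G \<noteq> 0" shows "tb ([:a,1:] * G) k = a * tb G (k-1) + tb G k"
  unfolding tb_def deg_lin[OF assms] C_lin by (simp add: algebra_simps)

lemma EVlin_case:
  fixes s j t ofs :: int
  assumes E: "EVP e" and a: "a > 0" and sj: "1 \<le> s" "s < j" "j \<le> t" and ofs: "ofs = 0 \<or> ofs = 1"
    and As: "tb ([:a,1:]*e) (2*s-ofs) - r * tb ([:a,1:]*e) (2*s-ofs-1) \<le> 0"
    and At: "tb ([:a,1:]*e) (2*t-ofs) - r * tb ([:a,1:]*e) (2*t-ofs-1) \<noteq> 0"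
  shows "tb ([:a,1:]*e) (2*j-ofs) - r * tb ([:a,1:]*e) (2*j-ofs-1) < 0"
proof -
  have nz: "e \<noteq> 0" using E unfolding EVP_def by (auto simp: C_def)
  define m where "m = int (degree e)"
  note T = EVP_tb[OF E, folded m_def]
  have od: "\<And>k. tb e (2*k-1) = 0" using T(1) by simp
  have od2: "\<And>k. tb e (2*k-3) = 0" by (rule T(1)) presburger
  note L = tb_lin[OF nz, of a]
  from ofs show ?thesis
  proof
    assume o1: "ofs = 1"
    have A: "\<And>k. tb ([:a,1:]*e) (2*k-1) - r * tb ([:a,1:]*e) (2*k-1-1) = (a - r) * tb e (2*k-2)"
      unfolding L using od od2 by (simp add: algebra_simps)
    have "(a - r) * tb e (2*t-2) \<noteq> 0" using At[unfolded o1 A] .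
    then have "tb e (2*t-2) \<noteq> 0" "a - r \<noteq> 0" by auto
    then have "2*t-2 \<le> m" using T(3) by force
    then have p: "tb e (2*s-2) > 0" "tb e (2*j-2) > 0" using T(2) sj by simp_all
    have "(a - r) * tb e (2*s-2) \<le> 0" using As o1 A[of s] by simp
    then have "a - r < 0" using p(1) \<open>a - r \<noteq> 0\<close> by (meson linorder_neqE_linordered_idom mult_pos_pos not_le)
    then show ?thesis using p o1 A[of j] by (simp add: mult_neg_pos)
  next
    assume o0: "ofs = 0"
    have A: "\<And>k. tb ([:a,1:]*e) (2*k) - r * tb ([:a,1:]*e) (2*k-1) = tb e (2*k) - r * a * tb e (2*k-2)"
      unfolding L using od by (simp add: algebra_simps)
    have "tb e (2*t) - r * a * tb e (2*t-2) \<noteq> 0" using At[unfolded o0] A[of t] by simp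
    then have "tb e (2*t) \<noteq> 0 \<or> tb e (2*t-2) \<noteq> 0" by auto
    then have tm: "2*t-2 \<le> m" using T(3) by force
    have step: "tb e (2*i+2) - r * a * tb e (2*i) < 0"
      if "1 \<le> i" "i < t" "tb e (2*i) - r * a * tb e (2*i-2) \<le> 0" for i
    proof -
      have p: "tb e (2*i-2) > 0" "tb e (2*i) > 0" using T(2) that tm by simp_all
      have "(tb e (2*i))\<^sup>2 > tb e (2*i-2) * tb e (2*i+2)" using T(4)[of "2*i"] that tm by simp
      then have cr: "tb e (2*i) * tb e (2*i) - tb e (2*i+2) * tb e (2*i-2) > 0"
        by (simp add: power2_eq_square algebra_simps)
      show ?thesis using ratio_step[OF p(1) p(2) cr, of "r*a"] that(3) by (simp add: algebra_simps)
    qed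
    have main: "\<And>n::nat. s + 1 + int n \<le> t \<Longrightarrow> tb e (2*(s+1+int n)) - r * a * tb e (2*(s+1+int n)-2) < 0"
    proof -
      fix n :: nat
      show "s + 1 + int n \<le> t \<Longrightarrow> tb e (2*(s+1+int n)) - r * a * tb e (2*(s+1+int n)-2) < 0"
      proof (induction n)
        case 0
        have "tb e (2*s) - r * a * tb e (2*s-2) \<le> 0" using As o0 A[of s] by simp
        then show ?case using step[of s] sj 0 by (simp add: algebra_simps)
      next
        case (Suc n)
        then have "tb e (2*(s+1+int n)) - r * a * tb e (2*(s+1+int n)-2) \<le> 0" by simp
        then have "tb e (2*(s+1+int n)+2) - r * a * tb e (2*(s+1+int n)) < 0"
          using Suc sj by (intro step) auto
        then show ?case by (simp add: algebra_simps)
      qed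
    qed
    have "j = s + 1 + int (nat (j - s - 1))" using sj by simp
    then have "tb e (2*j) - r * a * tb e (2*j-2) < 0" using main[of "nat (j-s-1)"] sj by simp
    then show ?thesis using A[of j] o0 by simp
  qed
qed

lemma C_nat: "C g (int n) = coeff g n"
  by (simp add: C_def)

lemma acoef_monom:
  assumes F: "F \<noteq> 0" shows "acoef (monom 1 z * F) k = acoef F k"
proof -
  have dg: "degree (monom 1 z * F) = z + degree F"
    using degree_mult_eq[of "monom (1::real) z" F] F by (simp add: degree_monom_eq)
  show ?thesis unfolding acoef_def dg by (auto simp: coeff_monom_mult coeff_eq_0)
qed

lemma acoef_lin:
  assumes G: "G \<noteq> 0" shows "acoef ([:-r,1:] * G) k = tb G (int k) - r * tb G (int k - 1)"
proof (cases "k \<le> degree G + 1")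
  case True
  have "acoef ([:-r,1:] * G) k = C ([:-r,1:] * G) (int (degree G + 1 - k))"
    unfolding acoef_def deg_lin[OF G] C_nat using True by simp
  also have "\<dots> = - r * C G (int (degree G + 1 - k)) + C G (int (degree G + 1 - k) - 1)"
    by (rule C_lin)
  also have "\<dots> = tb G (int k) - r * tb G (int k - 1)"
    unfolding tb_def using True by (simp add: of_nat_diff algebra_simps)
  finally show ?thesis .
next
  case False
  then have "acoef ([:-r,1:] * G) k = 0" unfolding acoef_def deg_lin[OF G] by simp
  moreover have "tb G (int k) = 0" "tb G (int k - 1) = 0" unfolding tb_def using False by (simp_all add: C_neg)
  ultimately show ?thesis by simp
qed

lemma pattern:
  fixes A :: "nat \<Rightarrow> real"
  assumes H: "\<And>s j. 1 \<le> s \<Longrightarrow> s < j \<Longrightarrow> j \<le> t \<Longrightarrow> A s \<le> 0 \<Longrightarrow> A j < 0"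
  shows "(\<forall>j\<in>{1..t}. A j > 0) \<or>
         (\<exists>s\<in>{1..t}. (\<forall>j\<in>{1..<s}. A j > 0) \<and> A s \<le> 0 \<and> (\<forall>j\<in>{s+1..t}. A j < 0))"
proof (cases "\<forall>j\<in>{1..t}. A j > 0")
  case True then show ?thesis by blast
next
  case False
  define P where "P j \<longleftrightarrow> j \<in> {1..t} \<and> A j \<le> 0" for j
  have ex: "\<exists>j. P j" using False unfolding P_def by (auto simp: not_less)
  define s where "s = (LEAST j. P j)"
  have Ps: "P s" unfolding s_def using LeastI_ex[OF ex] .
  have lt: "\<forall>j\<in>{1..<s}. A j > 0"
  proof
    fix j assume j: "j \<in> {1..<s}"
    then have "\<not> P j" unfolding s_def using not_less_Least by auto
    moreover have "j \<in> {1..t}" using j Ps unfolding P_def by auto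
    ultimately show "A j > 0" unfolding P_def by auto
  qed
  have gt: "\<forall>j\<in>{s+1..t}. A j < 0" using H Ps unfolding P_def by auto
  show ?thesis using Ps lt gt unfolding P_def by blast
qed

definition QP :: "real poly \<Rightarrow> real \<Rightarrow> bool" where
  "QP G r \<longleftrightarrow> (\<forall>s j t ofs::int. 1 \<le> s \<and> s < j \<and> j \<le> t \<and> (ofs = 0 \<or> ofs = 1) \<and>
     tb G (2*s-ofs) - r * tb G (2*s-ofs-1) \<le> 0 \<and> tb G (2*t-ofs) - r * tb G (2*t-ofs-1) \<noteq> 0
     \<longrightarrow> tb G (2*j-ofs) - r * tb G (2*j-ofs-1) < 0)"

lemma QP_factor:
  assumes E: "EV e" and H: "SP h" shows "QP (e * h) r"
proof -
  consider "degree h \<ge> 2" | "degree h = 0" | "degree h = 1" by linarith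
  then show ?thesis
  proof cases
    case 1
    then have "SS (e * h)" using EV_SS[OF E SP_SS[OF H]] by simp
    then show ?thesis unfolding QP_def using SS_case by blast
  next
    case 2
    then have "h = 1" using SP_deg0 H by simp
    then show ?thesis unfolding QP_def using EV_case[OF EV_EVP[OF E]] by simp blast
  next
    case 3
    then obtain a where a: "a > 0" "h = [:a,1:]" using SP_deg1 H by blast
    have eh: "e * h = [:a,1:] * e" using a(2) by (simp add: mult.commute)
    show ?thesis unfolding QP_def eh using EVlin_case[OF EV_EVP[OF E] a(1)] by blast
  qed
qed

lemma conclusion_from_factor:
  assumes f: "f = monom 1 z * ([:-r,1:] * G)" and Q: "QP G r" and G: "G \<noteq> 0"
  shows
   "(\<forall>t::nat. acoef f (2*t) \<noteq> 0 \<and> (\<forall>j>t. acoef f (2*j) = 0) \<longrightarrow>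
       (\<forall>j\<in>{1..t}. acoef f (2*j) > 0) \<or>
       (\<exists>s\<in>{1..t}. (\<forall>j\<in>{1..<s}. acoef f (2*j) > 0) \<and> acoef f (2*s) \<le> 0 \<and>
                    (\<forall>j\<in>{s+1..t}. acoef f (2*j) < 0)))
    \<and>
    (\<forall>t'::nat. t' \<ge> 1 \<and> acoef f (2*t'-1) \<noteq> 0 \<and> (\<forall>j>t'. acoef f (2*j-1) = 0) \<longrightarrow>
       (\<forall>j\<in>{1..t'}. acoef f (2*j-1) > 0) \<or>
       (\<exists>s'\<in>{1..t'}. (\<forall>j\<in>{1..<s'}. acoef f (2*j-1) > 0) \<and> acoef f (2*s'-1) \<le> 0 \<and>
                    (\<forall>j\<in>{s'+1..t'}. acoef f (2*j-1) < 0)))"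
proof -
  have F: "[:-r,1:] * G \<noteq> 0" using G by (simp del: mult_pCons_left)
  have ac: "acoef f k = tb G (int k) - r * tb G (int k - 1)" for k
    unfolding f acoef_monom[OF F] acoef_lin[OF G] ..
  have ev: "acoef f (2*j) = tb G (2*int j - 0) - r * tb G (2*int j - 0 - 1)" for j
    unfolding ac by simp
  have od: "j \<ge> 1 \<Longrightarrow> acoef f (2*j-1) = tb G (2*int j - 1) - r * tb G (2*int j - 1 - 1)" for j
    unfolding ac by (simp add: of_nat_diff)
  have P1: "\<forall>t::nat. acoef f (2*t) \<noteq> 0 \<and> (\<forall>j>t. acoef f (2*j) = 0) \<longrightarrow>
       (\<forall>j\<in>{1..t}. acoef f (2*j) > 0) \<or>
       (\<exists>s\<in>{1..t}. (\<forall>j\<in>{1..<s}. acoef f (2*j) > 0) \<and> acoef f (2*s) \<le> 0 \<and>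
                    (\<forall>j\<in>{s+1..t}. acoef f (2*j) < 0))"
  proof (intro allI impI)
    fix t :: nat assume a: "acoef f (2*t) \<noteq> 0 \<and> (\<forall>j>t. acoef f (2*j) = 0)"
    show "(\<forall>j\<in>{1..t}. acoef f (2*j) > 0) \<or>
       (\<exists>s\<in>{1..t}. (\<forall>j\<in>{1..<s}. acoef f (2*j) > 0) \<and> acoef f (2*s) \<le> 0 \<and>
                    (\<forall>j\<in>{s+1..t}. acoef f (2*j) < 0))"
    proof (rule pattern)
      fix s j :: nat assume h: "1 \<le> s" "s < j" "j \<le> t" "acoef f (2*s) \<le> 0"
      have "tb G (2*int j - 0) - r * tb G (2*int j - 0 - 1) < 0"
        using Q h a unfolding QP_def ev by (metis of_nat_le_iff of_nat_less_iff of_nat_1)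
      then show "acoef f (2*j) < 0" unfolding ev .
    qed
  qed
  have P2: "\<forall>t'::nat. t' \<ge> 1 \<and> acoef f (2*t'-1) \<noteq> 0 \<and> (\<forall>j>t'. acoef f (2*j-1) = 0) \<longrightarrow>
       (\<forall>j\<in>{1..t'}. acoef f (2*j-1) > 0) \<or>
       (\<exists>s'\<in>{1..t'}. (\<forall>j\<in>{1..<s'}. acoef f (2*j-1) > 0) \<and> acoef f (2*s'-1) \<le> 0 \<and>
                    (\<forall>j\<in>{s'+1..t'}. acoef f (2*j-1) < 0))"
  proof (intro allI impI)
    fix t :: nat assume a: "t \<ge> 1 \<and> acoef f (2*t-1) \<noteq> 0 \<and> (\<forall>j>t. acoef f (2*j-1) = 0)"
    show "(\<forall>j\<in>{1..t}. acoef f (2*j-1) > 0) \<or>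
       (\<exists>s\<in>{1..t}. (\<forall>j\<in>{1..<s}. acoef f (2*j-1) > 0) \<and> acoef f (2*s-1) \<le> 0 \<and>
                    (\<forall>j\<in>{s+1..t}. acoef f (2*j-1) < 0))"
    proof (rule pattern)
      fix s j :: nat assume h: "1 \<le> s" "s < j" "j \<le> t" "acoef f (2*s-1) \<le> 0"
      have A1: "tb G (2*int s - 1) - r * tb G (2*int s - 1 - 1) \<le> 0" using h od[of s] by simp
      have A2: "tb G (2*int t - 1) - r * tb G (2*int t - 1 - 1) \<noteq> 0" using a od[of t] by simp
      have "tb G (2*int j - 1) - r * tb G (2*int j - 1 - 1) < 0"
        using Q h A1 A2 unfolding QP_def by (metis of_nat_le_iff of_nat_less_iff of_nat_1)
      then show "acoef f (2*j-1) < 0" using od[of j] h by simp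
    qed
  qed
  show ?thesis using P1 P2 by blast
qed

abbreviation cpoly :: "real poly \<Rightarrow> complex poly" where
  "cpoly p \<equiv> map_poly complex_of_real p"

lemma cpoly_mult: "cpoly (p * q) = cpoly p * cpoly q"
  by (simp add: poly_eq_iff coeff_map_poly coeff_mult of_real_sum)

lemma cpoly_add: "cpoly (p + q) = cpoly p + cpoly q"
  by (simp add: poly_eq_iff coeff_map_poly)

lemma poly_cpoly_real: "poly (cpoly p) (complex_of_real x) = complex_of_real (poly p x)"
  by (induction p) (auto simp: map_poly_pCons)

lemma cpoly_lin: "cpoly [:c,1:] = [:complex_of_real c, 1:]"
  by (simp add: map_poly_pCons)

lemma cpoly_quad: "cpoly [:q,p,1:] = [:complex_of_real q, complex_of_real p, 1:]"
  by (simp add: map_poly_pCons)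

lemma deg1_poly:
  fixes R :: "real poly" assumes "degree R \<le> 1"
  shows "poly (cpoly R) w = complex_of_real (coeff R 0) + complex_of_real (coeff R 1) * w"
proof -
  have "R = [:coeff R 0, coeff R 1:]"
    using assms by (auto simp: poly_eq_iff coeff_pCons coeff_eq_0 split: nat.splits)
  then have "cpoly R = [:complex_of_real (coeff R 0), complex_of_real (coeff R 1):]"
    by (metis map_poly_pCons map_poly_0 of_real_0)
  then show ?thesis by simp
qed

lemma factorization:
  fixes g :: "real poly"
  assumes "lead_coeff g = 1" and "\<forall>z. poly (cpoly g) z = 0 \<longrightarrow> Re z \<le> 0"
  shows "\<exists>z e h. EV e \<and> SP h \<and> g = monom 1 z * (e * h)"
  using assms
proof (induction "degree g" arbitrary: g rule: less_induct)
  case less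
  note mon = less.prems(1) and rts = less.prems(2)
  have gnz: "g \<noteq> 0" using mon by auto
  show ?case
  proof (cases "degree g = 0")
    case True
    then have "g = [:1:]" using mon by (auto simp: poly_eq_iff coeff_pCons coeff_eq_0 split: nat.splits)
    then have "g = 1" by (simp add: one_pCons)
    then show ?thesis by (intro exI[of _ 0] exI[of _ 1]) (auto intro: EV1 SP1)
  next
    case False
    have dG: "degree (cpoly g) = degree g" by (simp add: degree_map_poly)
    then have "\<not> constant (poly (cpoly g))" using False constant_degree by metis
    then obtain w where w: "poly (cpoly g) w = 0" using fundamental_theorem_of_algebra by blast
    have Rew: "Re w \<le> 0" using rts w by blast
    have sub: "\<forall>z. poly (cpoly g1) z = 0 \<longrightarrow> Re z \<le> 0" if "g = Q * g1" for Q g1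
    proof (intro allI impI)
      fix z assume "poly (cpoly g1) z = 0"
      then have "poly (cpoly g) z = 0" unfolding that cpoly_mult by simp
      then show "Re z \<le> 0" using rts by blast
    qed
    show ?thesis
    proof (cases "Im w = 0")
      case True
      define c where "c = Re w"
      have wc: "w = complex_of_real c" using True unfolding c_def by (simp add: complex_eq_iff)
      have "poly g c = 0" using w unfolding wc poly_cpoly_real by simp
      then have gf: "g = [:-c,1:] * synthetic_div g c" using synthetic_div_correct'[of c g] by simp
      define g1 where "g1 = synthetic_div g c"
      have g1nz: "g1 \<noteq> 0" using gf gnz g1_def by auto
      have dg: "degree g = degree g1 + 1" using gf deg_lin[OF g1nz, of "-c"] g1_def by simp
      have m1: "lead_coeff g1 = 1" using mon gf g1_def lead_coeff_mult[of "[:-c,1:]" g1] by simp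
      obtain z e h where IH: "EV e" "SP h" "g1 = monom 1 z * (e * h)"
        using less.hyps[of g1] dg m1 sub[OF gf[folded g1_def]] by auto
      show ?thesis
      proof (cases "c = 0")
        case True
        have "g = monom 1 (Suc z) * (e * h)" using gf IH(3) True g1_def
          by (simp add: monom_Suc mult_pCons_left)
        then show ?thesis using IH by blast
      next
        case False
        then have "-c > 0" using Rew c_def by simp
        then have "SP ([:-c,1:] * h)" using IH(2) by (rule SP.SPl[rotated])
        moreover have "g = [:-c,1:] * (monom 1 z * (e * h))" using gf IH(3) g1_def by metis
        then have "g = monom 1 z * (e * ([:-c,1:] * h))" by (metis mult.left_commute)
        ultimately show ?thesis using IH(1) by blast
      qed
    next
      case False
      define p where "p = -2 * Re w"
      define q where "q = (cmod w)\<^sup>2"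
      define Q where "Q = [:q,p,1:]"
      have Qnz: "Q \<noteq> 0" unfolding Q_def by simp
      have dQ: "degree Q = 2" unfolding Q_def by simp
      have q0: "q > 0" unfolding q_def using False by (simp add: cmod_power2 sum_power2_gt_zero_iff)
      have p0: "p \<ge> 0" unfolding p_def using Rew by simp
      have Qw: "poly (cpoly Q) w = 0"
        unfolding Q_def cpoly_quad p_def q_def cmod_power2
        by (simp add: complex_eq_iff power2_eq_square algebra_simps)
      define R where "R = g mod Q"
      define g1 where "g1 = g div Q"
      have gd: "g = Q * g1 + R" unfolding R_def g1_def by (simp add: mult.commute)
      have dR: "degree R \<le> 1" using degree_mod_less[OF Qnz, of g] dQ unfolding R_def by auto
      have "poly (cpoly R) w = 0"
      proof -
        have "cpoly g = cpoly Q * cpoly g1 + cpoly R"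
          unfolding gd cpoly_mult cpoly_add ..
        then show ?thesis using w Qw by simp
      qed
      then have "complex_of_real (coeff R 0) + complex_of_real (coeff R 1) * w = 0"
        using deg1_poly[OF dR] by simp
      then have "coeff R 1 * Im w = 0" "coeff R 0 + coeff R 1 * Re w = 0"
        by (simp_all add: complex_eq_iff)
      then have "coeff R 1 = 0" "coeff R 0 = 0" using False by auto
      then have "coeff R n = 0" for n
      proof (cases "n \<le> 1")
        case True then have "n = 0 \<or> n = 1" by auto
        then show ?thesis using \<open>coeff R 1 = 0\<close> \<open>coeff R 0 = 0\<close> by auto
      next
        case False then show ?thesis using dR by (simp add: coeff_eq_0)
      qed
      then have "R = 0" by (simp add: poly_eq_iff)
      then have gf: "g = Q * g1" using gd by simp
      have g1nz: "g1 \<noteq> 0" using gf gnz by auto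
      have dg: "degree g = degree g1 + 2" using gf deg_quad[OF g1nz, of q p] Q_def by simp
      have m1: "lead_coeff g1 = 1" using mon gf lead_coeff_mult[of Q g1] Q_def by simp
      obtain z e h where IH: "EV e" "SP h" "g1 = monom 1 z * (e * h)"
        using less.hyps[of g1] dg m1 sub[OF gf] by auto
      show ?thesis
      proof (cases "Re w = 0")
        case True
        then have "p = 0" unfolding p_def by simp
        then have "EV ([:q,0,1:] * e)" using IH(1) q0 by (intro EV.EVq)
        moreover have "g = [:q,0,1:] * (monom 1 z * (e * h))" using gf IH(3) Q_def \<open>p = 0\<close> by metis
        then have "g = monom 1 z * (([:q,0,1:] * e) * h)" by (metis mult.left_commute mult.assoc)
        ultimately show ?thesis using IH(2) by blast
      next
        case False
        then have "p > 0" unfolding p_def using Rew by simp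
        then have "SP ([:q,p,1:] * h)" using IH(2) q0 by (intro SP.SPq)
        moreover have "g = [:q,p,1:] * (monom 1 z * (e * h))" using gf IH(3) Q_def by metis
        then have "g = monom 1 z * (e * ([:q,p,1:] * h))" by (metis mult.left_commute)
        ultimately show ?thesis using IH(1) by blast
      qed
    qed
  qed
qed

lemma lead_prod: "lead_coeff (\<Prod>x\<leftarrow>xs. [:- x, 1:]) = (1::complex)"
  by (induction xs) (simp_all add: lead_coeff_mult)

theorem theorem4p1:
  fixes f :: "real poly" and r :: real and xs :: "complex list"
  assumes roots: "map_poly complex_of_real f
                    = [:- complex_of_real r, 1:] * (\<Prod>x\<leftarrow>xs. [:- x, 1:])"
    and left: "\<forall>x\<in>set xs. Re x \<le> 0"
  shows
   "(\<forall>t::nat. acoef f (2*t) \<noteq> 0 \<and> (\<forall>j>t. acoef f (2*j) = 0) \<longrightarrow>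
       (\<forall>j\<in>{1..t}. acoef f (2*j) > 0) \<or>
       (\<exists>s\<in>{1..t}. (\<forall>j\<in>{1..<s}. acoef f (2*j) > 0) \<and> acoef f (2*s) \<le> 0 \<and>
                    (\<forall>j\<in>{s+1..t}. acoef f (2*j) < 0)))
    \<and>
    (\<forall>t'::nat. t' \<ge> 1 \<and> acoef f (2*t'-1) \<noteq> 0 \<and> (\<forall>j>t'. acoef f (2*j-1) = 0) \<longrightarrow>
       (\<forall>j\<in>{1..t'}. acoef f (2*j-1) > 0) \<or>
       (\<exists>s'\<in>{1..t'}. (\<forall>j\<in>{1..<s'}. acoef f (2*j-1) > 0) \<and> acoef f (2*s'-1) \<le> 0 \<and>
                    (\<forall>j\<in>{s'+1..t'}. acoef f (2*j-1) < 0)))"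
proof -
  let ?P = "\<Prod>x\<leftarrow>xs. [:- x, 1:]"
  have "complex_of_real (poly f r) = 0"
    using arg_cong[OF roots, of "\<lambda>p. poly p (complex_of_real r)"] unfolding poly_cpoly_real by simp
  then have "poly f r = 0" by simp
  then have ff: "f = [:-r,1:] * synthetic_div f r" using synthetic_div_correct'[of r f] by simp
  define g where "g = synthetic_div f r"
  have fg: "f = [:-r,1:] * g" using ff g_def by simp
  have "cpoly f = [:- complex_of_real r, 1:] * cpoly g"
    unfolding fg cpoly_mult cpoly_lin by simp
  then have cg: "cpoly g = ?P" using roots by simp
  have "complex_of_real (lead_coeff g) = lead_coeff (cpoly g)"
    by (simp add: degree_map_poly coeff_map_poly)
  then have mon: "lead_coeff g = 1" unfolding cg lead_prod by simp
  have rts: "\<forall>z. poly (cpoly g) z = 0 \<longrightarrow> Re z \<le> 0"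
  proof (intro allI impI)
    fix z assume "poly (cpoly g) z = 0"
    moreover have "poly ?P z = (\<Prod>x\<leftarrow>xs. z - x)" by (induction xs) simp_all
    ultimately have "(\<Prod>x\<leftarrow>xs. z - x) = 0" unfolding cg by simp
    then obtain x where "x \<in> set xs" "z - x = 0" by (auto simp: prod_list_zero_iff)
    then show "Re z \<le> 0" using left by simp
  qed
  obtain z e h where F: "EV e" "SP h" "g = monom 1 z * (e * h)" using factorization[OF mon rts] by blast
  have f2: "f = monom 1 z * ([:-r,1:] * (e * h))" unfolding fg F(3) by (metis mult.left_commute)
  have nz: "e * h \<noteq> 0" using EV_nz[OF F(1)] SP_nz[OF F(2)] by simp
  show ?thesis by (rule conclusion_from_factor[OF f2 QP_factor[OF F(1) F(2)] nz])
qed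

end
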